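(* Let $X$ be a $T_1$ topological space. Then $T''(X)$ is a (Von Neumann) regular ring if and only if for each $Z\in Z''[X]$ there exists a dense cozero set $U$ in $X$ such that $Z\cap U$ is clopen in the subspace $U$.
   Context: $C(X)$ is the ring of real-valued continuous functions on $X$; a cozero set is a set $\{x: h(x)\neq 0\}$ with $h\in C(X)$. $T''(X)$ is the ring (under pointwise operations) of all functions $f\colon X\to\mathbb{R}$ for which there is a dense cozero set $U$ of $X$ with $f|_U$ continuous. For $f\colon X\to \mathbb{R}$, $Z(f)=\{x: f(x)=0\}$, and $Z''[X]=\{Z(f): f\in T''(X)\}$. A commutative ring $R$ is regular if for each $a\in R$ there is $x\in R$ with $a=a^2x$. *)

theory Defs
  imports "HOL-Analysis.Analysis"
begin

definition cozero_set :: "'a topology \<Rightarrow> 'a set \<Rightarrow> bool" where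
  "cozero_set X U \<longleftrightarrow>
     (\<exists>h. continuous_map X euclideanreal h \<and> U = {x \<in> topspace X. h x \<noteq> 0})"

definition dense_in :: "'a topology \<Rightarrow> 'a set \<Rightarrow> bool" where
  "dense_in X U \<longleftrightarrow> U \<subseteq> topspace X \<and> X closure_of U = topspace X"

text \<open>Functions are
  represented as 'a \<Rightarrow> real, normalised to 0 outside topspace X, so that the
  pointwise ring operations and equality are those of functions on X.\<close>
definition Tpp :: "'a topology \<Rightarrow> ('a \<Rightarrow> real) set" where
  "Tpp X = {f. (\<forall>x. x \<notin> topspace X \<longrightarrow> f x = 0) \<and>
               (\<exists>U. cozero_set X U \<and> dense_in X U \<and>
                    continuous_map (subtopology X U) euclideanreal f)}"

definition zero_set :: "'a topology \<Rightarrow> ('a \<Rightarrow> real) \<Rightarrow> 'a set" where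
  "zero_set X f = {x \<in> topspace X. f x = 0}"

definition Zpp :: "'a topology \<Rightarrow> 'a set set" where
  "Zpp X = zero_set X ` Tpp X"

definition regular_fun_ring :: "('a \<Rightarrow> real) set \<Rightarrow> bool" where
  "regular_fun_ring R \<longleftrightarrow> (\<forall>a\<in>R. \<exists>y\<in>R. a = (\<lambda>p. (a p)\<^sup>2 * y p))"

end

theory Submission
  imports Defs
begin

lemma cozero_open: "cozero_set X U \<Longrightarrow> openin X U"
  unfolding cozero_set_def
proof (elim exE conjE)
  fix h assume h: "continuous_map X euclideanreal h" and U: "U = {x \<in> topspace X. h x \<noteq> 0}"
  have "openin X {x \<in> topspace X. h x \<in> -{0}}"
    using openin_continuous_map_preimage[OF h, of "-{0}"] by (simp add: open_Compl)
  then show "openin X U" using U by simp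
qed

lemma dense_cozero_Int:
  assumes "cozero_set X U" "dense_in X U" "cozero_set X V" "dense_in X V"
  shows "cozero_set X (U \<inter> V) \<and> dense_in X (U \<inter> V)"
proof
  obtain h1 where h1: "continuous_map X euclideanreal h1" "U = {x \<in> topspace X. h1 x \<noteq> 0}"
    using assms(1) unfolding cozero_set_def by blast
  obtain h2 where h2: "continuous_map X euclideanreal h2" "V = {x \<in> topspace X. h2 x \<noteq> 0}"
    using assms(3) unfolding cozero_set_def by blast
  show "cozero_set X (U \<inter> V)"
    unfolding cozero_set_def
    by (rule exI[of _ "\<lambda>x. h1 x * h2 x"]) (auto simp: h1 h2 continuous_map_real_mult)
  have oU: "openin X U" using cozero_open assms(1) by blast
  have "X closure_of (U \<inter> V) = X closure_of U"
    by (rule closure_of_openin_Int_superset) (use oU assms(4) openin_subset in \<open>auto simp: dense_in_def\<close>)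
  then show "dense_in X (U \<inter> V)" using assms(2,4) unfolding dense_in_def by auto
qed

theorem theorem3p1:
  fixes X :: "'a topology"
  assumes "t1_space X"
  shows "regular_fun_ring (Tpp X) \<longleftrightarrow>
    (\<forall>Z\<in>Zpp X. \<exists>U. cozero_set X U \<and> dense_in X U \<and>
        openin (subtopology X U) (Z \<inter> U) \<and> closedin (subtopology X U) (Z \<inter> U))"
proof
  assume reg: "regular_fun_ring (Tpp X)"
  show "\<forall>Z\<in>Zpp X. \<exists>U. cozero_set X U \<and> dense_in X U \<and>
        openin (subtopology X U) (Z \<inter> U) \<and> closedin (subtopology X U) (Z \<inter> U)"
  proof
    fix Z assume "Z \<in> Zpp X"
    then obtain f where f: "f \<in> Tpp X" and Z: "Z = zero_set X f" unfolding Zpp_def by blast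
    obtain g where g: "g \<in> Tpp X" and fg: "f = (\<lambda>p. (f p)\<^sup>2 * g p)"
      using reg f unfolding regular_fun_ring_def by blast
    obtain U1 where U1: "cozero_set X U1" "dense_in X U1" "continuous_map (subtopology X U1) euclideanreal f"
      using f unfolding Tpp_def by blast
    obtain U2 where U2: "cozero_set X U2" "dense_in X U2" "continuous_map (subtopology X U2) euclideanreal g"
      using g unfolding Tpp_def by blast
    define U where "U = U1 \<inter> U2"
    have U: "cozero_set X U" "dense_in X U" using dense_cozero_Int[OF U1(1,2) U2(1,2)] U_def by auto
    have cf: "continuous_map (subtopology X U) euclideanreal f"
      using continuous_map_from_subtopology_mono[OF U1(3)] U_def by auto
    have cg: "continuous_map (subtopology X U) euclideanreal g"
      using continuous_map_from_subtopology_mono[OF U2(3)] U_def by auto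
    have cfg: "continuous_map (subtopology X U) euclideanreal (\<lambda>x. f x * g x)"
      using cf cg by (rule continuous_map_real_mult)
    have Usub: "U \<subseteq> topspace X" using U(2) unfolding dense_in_def by auto
    have fgv: "f x * g x = (if f x = 0 then 0 else 1)" for x
    proof -
      have "f x = (f x)\<^sup>2 * g x" using fun_cong[OF fg, of x] by simp
      then show ?thesis by (auto simp: power2_eq_square)
    qed
    have e1: "Z \<inter> U = {x \<in> topspace (subtopology X U). f x * g x \<in> {..<1/2}}"
      using Usub by (auto simp: Z zero_set_def fgv)
    have e2: "Z \<inter> U = {x \<in> topspace (subtopology X U). f x \<in> {0}}"
      using Usub by (auto simp: Z zero_set_def)
    have "openin (subtopology X U) (Z \<inter> U)"
      unfolding e1 by (rule openin_continuous_map_preimage[OF cfg]) auto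
    moreover have "closedin (subtopology X U) (Z \<inter> U)"
      unfolding e2 by (rule closedin_continuous_map_preimage[OF cf]) auto
    ultimately show "\<exists>U. cozero_set X U \<and> dense_in X U \<and>
        openin (subtopology X U) (Z \<inter> U) \<and> closedin (subtopology X U) (Z \<inter> U)"
      using U by blast
  qed
next
  assume H: "\<forall>Z\<in>Zpp X. \<exists>U. cozero_set X U \<and> dense_in X U \<and>
        openin (subtopology X U) (Z \<inter> U) \<and> closedin (subtopology X U) (Z \<inter> U)"
  show "regular_fun_ring (Tpp X)"
    unfolding regular_fun_ring_def
  proof
    fix f assume f: "f \<in> Tpp X"
    define Z where "Z = zero_set X f"
    have "Z \<in> Zpp X" using f Z_def Zpp_def by blast
    then obtain U1 where U1: "cozero_set X U1" "dense_in X U1"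
        "openin (subtopology X U1) (Z \<inter> U1)" "closedin (subtopology X U1) (Z \<inter> U1)"
      using H by blast
    obtain U2 where U2: "cozero_set X U2" "dense_in X U2" "continuous_map (subtopology X U2) euclideanreal f"
      using f unfolding Tpp_def by blast
    have f0: "\<And>x. x \<notin> topspace X \<Longrightarrow> f x = 0" using f unfolding Tpp_def by blast
    define U where "U = U1 \<inter> U2"
    have U: "cozero_set X U" "dense_in X U" using dense_cozero_Int[OF U1(1,2) U2(1,2)] U_def by auto
    have Usub: "U \<subseteq> topspace X" using U(2) unfolding dense_in_def by auto
    have cf: "continuous_map (subtopology X U) euclideanreal f"
      using continuous_map_from_subtopology_mono[OF U2(3)] U_def by auto
    have c1: "closedin (subtopology X U) (Z \<inter> U)"
    proof -
      have "closedin (subtopology X U1) (U1 \<inter> Z)" using U1(4) by (simp add: Int_commute)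
      then have "closedin (subtopology X U) (U \<inter> Z)"
        by (rule closedin_subtopology_Int_subset) (auto simp: U_def)
      then show ?thesis by (simp add: Int_commute)
    qed
    have o1: "openin (subtopology X U) (U - Z)"
    proof -
      have "U - Z = topspace (subtopology X U) - (Z \<inter> U)" using Usub by auto
      then show ?thesis using c1 by (metis openin_diff openin_topspace)
    qed
    have o2: "openin (subtopology X U) (Z \<inter> U)"
    proof -
      obtain T where T: "openin X T" "Z \<inter> U1 = T \<inter> U1" using U1(3) openin_subtopology by metis
      have "Z \<inter> U = T \<inter> U" using T(2) unfolding U_def by blast
      then show ?thesis using T(1) openin_subtopology by blast
    qed
    define g where "g x = (if f x = 0 then 0 else inverse (f x))" for x
    have cg: "continuous_map (subtopology X U) euclideanreal g"
    proof (rule pasting_lemma[where I="{True,False}" and T="\<lambda>b. if b then Z \<inter> U else U - Z"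
          and f="\<lambda>b. if b then (\<lambda>x. 0) else (\<lambda>x. inverse (f x))"])
      fix i :: bool assume "i \<in> {True, False}"
      show "openin (subtopology X U) (if i then Z \<inter> U else U - Z)" using o1 o2 by auto
      show "continuous_map (subtopology (subtopology X U) (if i then Z \<inter> U else U - Z)) euclideanreal
          (if i then (\<lambda>x. 0) else (\<lambda>x. inverse (f x)))"
      proof (cases i)
        case True then show ?thesis by simp
      next
        case False
        have "continuous_map (subtopology (subtopology X U) (U - Z)) euclideanreal f"
          using continuous_map_from_subtopology[OF cf] by blast
        then have "continuous_map (subtopology (subtopology X U) (U - Z)) euclideanreal (\<lambda>x. inverse (f x))"
          by (rule continuous_map_real_inverse) (auto simp: Z_def zero_set_def)
        then show ?thesis using False by simp
      qed
    next
      fix i j :: bool and x assume "i \<in> {True, False}" "j \<in> {True, False}"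
        "x \<in> topspace (subtopology X U) \<inter> (if i then Z \<inter> U else U - Z) \<inter> (if j then Z \<inter> U else U - Z)"
      then show "(if i then (\<lambda>x. 0) else (\<lambda>x. inverse (f x))) x = (if j then (\<lambda>x. 0) else (\<lambda>x. inverse (f x))) x"
        by (cases i; cases j) auto
    next
      fix x assume "x \<in> topspace (subtopology X U)"
      then show "\<exists>j. j \<in> {True, False} \<and> x \<in> (if j then Z \<inter> U else U - Z) \<and>
          g x = (if j then (\<lambda>x. 0) else (\<lambda>x. inverse (f x))) x"
        using Usub by (cases "f x = 0") (auto simp: g_def Z_def zero_set_def)
    qed
    have "g \<in> Tpp X"
      unfolding Tpp_def using U cg f0 by (auto simp: g_def)
    moreover have "f = (\<lambda>p. (f p)\<^sup>2 * g p)"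
      by (rule ext) (auto simp: g_def power2_eq_square)
    ultimately show "\<exists>y\<in>Tpp X. f = (\<lambda>p. (f p)\<^sup>2 * y p)" by blast
  qed
qed

end
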